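(* There exists a constant $c>0$ such that if $p=p(n)\le c/n^2$, then asymptotically almost surely the random triangular group $\Gamma(n,p)$ is a free group.
   Context: The random triangular group $\Gamma(n,p)$ is the group given by a presentation $\langle S\mid R\rangle$, where $S$ is a set of $n$ generators and $R$ is a random set of relations obtained by including independently, each with probability $p$, every cyclically reduced word of length three over the alphabet $S\cup S^{-1}$ (i.e. every word $abc$ with letters in $S\cup S^{-1}$ such that $a\neq b^{-1}$, $b\neq c^{-1}$, $c\neq a^{-1}$; distinct words are distinct candidates, in particular cyclic shifts of a word are distinct words). A property holds asymptotically almost surely (a.a.s.) if its probability tends to $1$ as $n\to\infty$. *)

theory Defs
  imports Complex_Main "HOL-Algebra.Group"
begin

text \<open>Letters over the alphabet S \<union> S^-1 with S = {s_0,...,s_(n-1)}: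
  a letter (i, False) is the generator s_i, (i, True) is its inverse.\<close>
type_synonym letter = "nat \<times> bool"

definition inv_letter :: "letter \<Rightarrow> letter" where
  "inv_letter x = (fst x, \<not> snd x)"

definition words :: "nat \<Rightarrow> letter list set" where
  "words n = {w. \<forall>x\<in>set w. fst x < n}"

definition pres_step :: "nat \<Rightarrow> letter list set \<Rightarrow> (letter list \<times> letter list) set" where
  "pres_step n R =
     {(u @ [x, inv_letter x] @ v, u @ v) | u v x. u \<in> words n \<and> v \<in> words n \<and> fst x < n}
   \<union> {(u @ r @ v, u @ v) | u v r. u \<in> words n \<and> v \<in> words n \<and> r \<in> R}"

definition pres_eq :: "nat \<Rightarrow> letter list set \<Rightarrow> (letter list \<times> letter list) set" where
  "pres_eq n R = (pres_step n R \<union> (pres_step n R)\<inverse>)\<^sup>*"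

definition presented_group :: "nat \<Rightarrow> letter list set \<Rightarrow> letter list set monoid" where
  "presented_group n R =
     \<lparr> carrier = words n // pres_eq n R,
       mult = (\<lambda>A B. pres_eq n R `` {(SOME a. a \<in> A) @ (SOME b. b \<in> B)}),
       one = pres_eq n R `` {[]} \<rparr>"

definition free_group_rank :: "nat \<Rightarrow> letter list set monoid" where
  "free_group_rank k = presented_group k {}"

text \<open>A group is free if it is isomorphic to a free group (of some finite rank;
  every quotient of a finitely generated group is finitely generated).\<close>
definition is_free_group :: "('a, 'b) monoid_scheme \<Rightarrow> bool" where
  "is_free_group G \<longleftrightarrow> (\<exists>k. G \<cong> free_group_rank k)"

definition tri_words :: "nat \<Rightarrow> letter list set" where
  "tri_words n = {[a, b, c] | a b c. fst a < n \<and> fst b < n \<and> fst c < n \<and>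
       a \<noteq> inv_letter b \<and> b \<noteq> inv_letter c \<and> c \<noteq> inv_letter a}"

text \<open>Probability that \<Gamma>(n,p) is free: each candidate relator included independently
  with probability p.\<close>
definition prob_tri_free :: "nat \<Rightarrow> real \<Rightarrow> real" where
  "prob_tri_free n p =
     (\<Sum>R\<in>Pow (tri_words n).
        if is_free_group (presented_group n R)
        then p ^ card R * (1 - p) ^ (card (tri_words n) - card R) else 0)"

end

theory Submission
  imports Defs
begin

definition invw :: "letter list \<Rightarrow> letter list" where
  "invw w = rev (map inv_letter w)"

definition ext :: "(nat \<Rightarrow> letter list) \<Rightarrow> letter \<Rightarrow> letter list" where
  "ext f l = (if snd l then invw (f (fst l)) else f (fst l))"

definition subst :: "(nat \<Rightarrow> letter list) \<Rightarrow> letter list \<Rightarrow> letter list" where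
  "subst f w = concat (map (ext f) w)"

lemma inv_inv[simp]: "inv_letter (inv_letter x) = x"
  by (simp add: inv_letter_def)
lemma fst_inv[simp]: "fst (inv_letter x) = fst x"
  by (simp add: inv_letter_def)
lemma invw_invw[simp]: "invw (invw w) = w"
  by (simp add: invw_def rev_map comp_def)
lemma invw_append[simp]: "invw (a @ b) = invw b @ invw a"
  by (simp add: invw_def)
lemma invw_Nil[simp]: "invw [] = []" by (simp add: invw_def)
lemma invw_Cons[simp]: "invw (x # w) = invw w @ [inv_letter x]" by (simp add: invw_def)
lemma set_invw_fst[simp]: "fst ` set (invw w) = fst ` set w"
  by (auto simp: invw_def image_image)

lemma words_append[simp]: "a @ b \<in> words n \<longleftrightarrow> a \<in> words n \<and> b \<in> words n"
  by (auto simp: words_def)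
lemma words_Cons[simp]: "x # b \<in> words n \<longleftrightarrow> fst x < n \<and> b \<in> words n"
  by (auto simp: words_def)
lemma words_Nil[simp]: "[] \<in> words n" by (simp add: words_def)
lemma words_invw[simp]: "invw w \<in> words n \<longleftrightarrow> w \<in> words n"
  by (auto simp: words_def invw_def)

lemma subst_Nil[simp]: "subst f [] = []" by (simp add: subst_def)
lemma subst_Cons[simp]: "subst f (x # w) = ext f x @ subst f w" by (simp add: subst_def)
lemma subst_append[simp]: "subst f (a @ b) = subst f a @ subst f b" by (simp add: subst_def)
lemma ext_inv: "ext f (inv_letter l) = invw (ext f l)"
  by (cases l) (auto simp: ext_def inv_letter_def)
lemma subst_invw: "subst f (invw w) = invw (subst f w)"
  by (induction w) (auto simp: ext_inv)
lemma subst_words: "(\<And>i. i < n \<Longrightarrow> f i \<in> words m) \<Longrightarrow> w \<in> words n \<Longrightarrow> subst f w \<in> words m"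
  by (induction w) (auto simp: ext_def)
lemma ext_subst: "ext (\<lambda>i. subst f (g i)) l = subst f (ext g l)"
  by (auto simp: ext_def subst_invw)
lemma subst_subst: "subst f (subst g w) = subst (\<lambda>i. subst f (g i)) w"
  by (induction w) (auto simp: ext_subst)
lemma subst_cong: "(\<And>l. l \<in> set w \<Longrightarrow> f (fst l) = f' (fst l)) \<Longrightarrow> subst f w = subst f' w"
  by (induction w) (auto simp: ext_def)
lemma subst_id: "(\<And>l. l \<in> set w \<Longrightarrow> f (fst l) = [(fst l, False)]) \<Longrightarrow> subst f w = w"
  by (induction w) (auto simp: ext_def inv_letter_def)
lemma subst_fst: "l \<in> set (subst f w) \<Longrightarrow> \<exists>l0\<in>set w. fst l \<in> fst ` set (f (fst l0))"
proof (induction w)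
  case (Cons a w)
  then show ?case
    by (auto simp: ext_def split: if_splits) (metis set_invw_fst image_eqI)
qed simp

lemma pres_eq_refl[simp]: "(a, a) \<in> pres_eq n R" by (simp add: pres_eq_def)
lemma pres_eq_sym: "(a, b) \<in> pres_eq n R \<Longrightarrow> (b, a) \<in> pres_eq n R"
  unfolding pres_eq_def
  by (metis converse_Un converse_converse rtrancl_converseI sup_commute)
lemma pres_eq_trans: "(a, b) \<in> pres_eq n R \<Longrightarrow> (b, c) \<in> pres_eq n R \<Longrightarrow> (a, c) \<in> pres_eq n R"
  unfolding pres_eq_def by (rule rtrancl_trans)
lemma pres_step_eq: "(a, b) \<in> pres_step n R \<Longrightarrow> (a, b) \<in> pres_eq n R"
  unfolding pres_eq_def by auto

lemma free_red: "u \<in> words n \<Longrightarrow> v \<in> words n \<Longrightarrow> fst x < n \<Longrightarrow>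
   (u @ [x, inv_letter x] @ v, u @ v) \<in> pres_eq n R"
  by (rule pres_step_eq, unfold pres_step_def, cases x) blast
lemma rel_red: "u \<in> words n \<Longrightarrow> v \<in> words n \<Longrightarrow> r \<in> R \<Longrightarrow>
   (u @ r @ v, u @ v) \<in> pres_eq n R"
  by (rule pres_step_eq) (auto simp: pres_step_def)

lemma pres_step_ctx: "(a, b) \<in> pres_step n R \<Longrightarrow> c \<in> words n \<Longrightarrow> d \<in> words n \<Longrightarrow>
   (c @ a @ d, c @ b @ d) \<in> pres_step n R"
  unfolding pres_step_def
  apply (elim UnE CollectE exE conjE)
   apply (rule UnI1, simp, rule_tac x="c @ u" in exI, rule_tac x="v @ d" in exI, auto)[1]
  apply (rule UnI2, simp, rule_tac x="c @ u" in exI, rule_tac x="v @ d" in exI, auto)[1]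
  done

lemma pres_eq_ctx: "(a, b) \<in> pres_eq n R \<Longrightarrow> c \<in> words n \<Longrightarrow> d \<in> words n \<Longrightarrow>
   (c @ a @ d, c @ b @ d) \<in> pres_eq n R"
  unfolding pres_eq_def
proof (induction rule: rtrancl_induct)
  case (step y z)
  then have "(c @ y @ d, c @ z @ d) \<in> pres_step n R \<union> (pres_step n R)\<inverse>"
    using pres_step_ctx by blast
  with step show ?case by (meson rtrancl.rtrancl_into_rtrancl)
qed simp

lemma pres_eq_app: "(a, a') \<in> pres_eq n R \<Longrightarrow> (b, b') \<in> pres_eq n R \<Longrightarrow>
   a \<in> words n \<Longrightarrow> b' \<in> words n \<Longrightarrow> (a @ b, a' @ b') \<in> pres_eq n R"
  using pres_eq_ctx[of a a' n R "[]" b'] pres_eq_ctx[of b b' n R a "[]"]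
  by (auto intro: pres_eq_trans)

lemma pres_eq_mono: "R \<subseteq> R' \<Longrightarrow> (a, b) \<in> pres_eq n R \<Longrightarrow> (a, b) \<in> pres_eq n R'"
  unfolding pres_eq_def
  by (rule rtrancl_mono[THEN subsetD], auto simp: pres_step_def) 

lemma pres_step_words: "R \<subseteq> words n \<Longrightarrow> (a, b) \<in> pres_step n R \<Longrightarrow> a \<in> words n \<and> b \<in> words n"
  unfolding pres_step_def by (auto simp: subset_iff)

lemma pres_eq_words: assumes "R \<subseteq> words n" "(a, b) \<in> pres_eq n R" "a \<in> words n" shows "b \<in> words n"
  using assms(2,3) unfolding pres_eq_def
proof (induction rule: rtrancl_induct)
  case (step y z)
  then show ?case using pres_step_words[OF assms(1)] by auto
qed simp

lemma cancel_r: "w \<in> words n \<Longrightarrow> (w @ invw w, []) \<in> pres_eq n R"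
proof (induction w)
  case (Cons x w)
  then have "(x # (w @ invw w) @ [inv_letter x], [x] @ [] @ [inv_letter x]) \<in> pres_eq n R"
    using pres_eq_ctx[of "w @ invw w" "[]" n R "[x]" "[inv_letter x]"] by auto
  moreover have "([x, inv_letter x], []) \<in> pres_eq n R"
    using free_red[of "[]" n "[]" x R] Cons by auto
  ultimately show ?case by (auto intro: pres_eq_trans)
qed simp

lemma cancel_l: "w \<in> words n \<Longrightarrow> (invw w @ w, []) \<in> pres_eq n R"
  using cancel_r[of "invw w" n R] by simp

lemma invw_single: "(a, [l]) \<in> pres_eq n R \<Longrightarrow> a \<in> words n \<Longrightarrow> fst l < n \<Longrightarrow>
    (invw a, [inv_letter l]) \<in> pres_eq n R"
proof -
  assume h: "(a, [l]) \<in> pres_eq n R" "a \<in> words n" "fst l < n"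
  have "(invw a @ a @ [inv_letter l], [] @ [inv_letter l]) \<in> pres_eq n R"
    using pres_eq_ctx[OF cancel_l[OF h(2)], of "[]" "[inv_letter l]"] h by auto
  moreover have "(invw a @ a @ [inv_letter l], invw a @ [l] @ [inv_letter l]) \<in> pres_eq n R"
    using pres_eq_ctx[OF h(1), of "invw a" "[inv_letter l]"] h by auto
  moreover have "(invw a @ [l] @ [inv_letter l], invw a @ []) \<in> pres_eq n R"
    using free_red[of "invw a" n "[]" l R] h by auto
  ultimately show ?thesis by simp (meson pres_eq_sym pres_eq_trans)
qed


definition cls :: "nat \<Rightarrow> letter list set \<Rightarrow> letter list \<Rightarrow> letter list set" where
  "cls n R w = pres_eq n R `` {w}"

lemma cls_eqI: "(a, b) \<in> pres_eq n R \<Longrightarrow> cls n R a = cls n R b"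
  unfolding cls_def by (auto intro: pres_eq_trans pres_eq_sym)

lemma cls_eqD: "cls n R a = cls n R b \<Longrightarrow> (a, b) \<in> pres_eq n R"
  unfolding cls_def by (metis Image_singleton_iff pres_eq_refl pres_eq_sym)

lemma carrier_pg: "carrier (presented_group n R) = cls n R ` words n"
  by (auto simp: presented_group_def quotient_def cls_def)

lemma some_cls: "(a, SOME a'. a' \<in> cls n R a) \<in> pres_eq n R"
proof -
  have "a \<in> cls n R a" by (simp add: cls_def)
  then have "(SOME a'. a' \<in> cls n R a) \<in> cls n R a" by (rule someI)
  then show ?thesis by (simp add: cls_def)
qed

lemma mult_pg: assumes "R \<subseteq> words n" "a \<in> words n" "b \<in> words n"
  shows "mult (presented_group n R) (cls n R a) (cls n R b) = cls n R (a @ b)"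
proof -
  let ?a = "SOME a'. a' \<in> cls n R a" and ?b = "SOME a'. a' \<in> cls n R b"
  have "(a, ?a) \<in> pres_eq n R" "(b, ?b) \<in> pres_eq n R" by (rule some_cls)+
  moreover have "?b \<in> words n" using pres_eq_words[OF assms(1) some_cls assms(3)] .
  ultimately have "(a @ b, ?a @ ?b) \<in> pres_eq n R" using assms by (intro pres_eq_app)
  then show ?thesis unfolding presented_group_def by (simp add: cls_def[symmetric] cls_eqI[symmetric])
qed

lemma subst_step: assumes f: "\<And>i. i < n \<Longrightarrow> f i \<in> words m"
  and rel: "\<And>r. r \<in> R \<Longrightarrow> (subst f r, []) \<in> pres_eq m R2"
  and st: "(a, b) \<in> pres_step n R"
  shows "(subst f a, subst f b) \<in> pres_eq m R2"
  using st unfolding pres_step_def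
proof (elim UnE CollectE exE conjE)
  fix u v x assume h: "(a, b) = (u @ [x, inv_letter x] @ v, u @ v)" "u \<in> words n" "v \<in> words n" "fst x < n"
  have w: "subst f u \<in> words m" "subst f v \<in> words m" "ext f x \<in> words m"
    using h f subst_words[of n f m] by (auto simp: ext_def)
  have "(ext f x @ ext f (inv_letter x), []) \<in> pres_eq m R2"
    using cancel_r[OF w(3)] by (simp add: ext_inv)
  from pres_eq_ctx[OF this w(1) w(2)] h show ?thesis by simp
next
  fix u v r assume h: "(a, b) = (u @ r @ v, u @ v)" "u \<in> words n" "v \<in> words n" "r \<in> R"
  have w: "subst f u \<in> words m" "subst f v \<in> words m"
    using h f subst_words[of n f m] by auto
  from pres_eq_ctx[OF rel[OF h(4)] w(1) w(2)] h show ?thesis by simp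
qed

lemma subst_resp: assumes f: "\<And>i. i < n \<Longrightarrow> f i \<in> words m"
  and rel: "\<And>r. r \<in> R \<Longrightarrow> (subst f r, []) \<in> pres_eq m R2"
  and ab: "(a, b) \<in> pres_eq n R"
  shows "(subst f a, subst f b) \<in> pres_eq m R2"
  using ab unfolding pres_eq_def[of n R]
proof (induction rule: rtrancl_induct)
  case (step y z)
  then have "(subst f y, subst f z) \<in> pres_eq m R2"
    using subst_step[OF f rel] pres_eq_sym by blast
  with step show ?case by (blast intro: pres_eq_trans)
qed simp

definition Theta :: "(nat \<Rightarrow> letter list) \<Rightarrow> nat \<Rightarrow> letter list set \<Rightarrow> letter list set \<Rightarrow> letter list set" where
  "Theta f m R2 A = cls m R2 (subst f (SOME a. a \<in> A))"

lemma Theta_cls: assumes f: "\<And>i. i < n \<Longrightarrow> f i \<in> words m"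
  and rel: "\<And>r. r \<in> R \<Longrightarrow> (subst f r, []) \<in> pres_eq m R2"
  shows "Theta f m R2 (cls n R a) = cls m R2 (subst f a)"
  unfolding Theta_def
  by (rule cls_eqI, rule pres_eq_sym, rule subst_resp[OF f rel some_cls])

lemma Theta_hom: assumes f: "\<And>i. i < n \<Longrightarrow> f i \<in> words m"
  and rel: "\<And>r. r \<in> R \<Longrightarrow> (subst f r, []) \<in> pres_eq m R2"
  and R: "R \<subseteq> words n" and R2: "R2 \<subseteq> words m"
  shows "Theta f m R2 \<in> hom (presented_group n R) (presented_group m R2)"
  unfolding hom_def
proof (intro CollectI conjI ballI funcsetI)
  fix x assume "x \<in> carrier (presented_group n R)"
  then obtain a where a: "a \<in> words n" "x = cls n R a" by (auto simp: carrier_pg)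
  then show "Theta f m R2 x \<in> carrier (presented_group m R2)"
    by (simp add: Theta_cls[OF f rel] carrier_pg subst_words[OF f])
next
  fix x y assume "x \<in> carrier (presented_group n R)" "y \<in> carrier (presented_group n R)"
  then obtain a b where a: "a \<in> words n" "x = cls n R a" "b \<in> words n" "y = cls n R b"
    by (auto simp: carrier_pg)
  then show "Theta f m R2 (x \<otimes>\<^bsub>presented_group n R\<^esub> y) =
      Theta f m R2 x \<otimes>\<^bsub>presented_group m R2\<^esub> Theta f m R2 y"
    by (simp add: mult_pg[OF R] mult_pg[OF R2] Theta_cls[OF f rel] subst_words[OF f])
qed


definition gensR :: "letter list set \<Rightarrow> nat set" where
  "gensR R = (\<Union>r\<in>R. fst ` set r)"

definition good :: "letter list set \<Rightarrow> bool" where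
  "good R \<longleftrightarrow> (\<forall>S\<subseteq>R. S \<noteq> {} \<longrightarrow> (\<exists>r\<in>S. \<exists>x. length (filter (\<lambda>l. fst l = x) r) = 1 \<and>
       (\<forall>r'\<in>S - {r}. x \<notin> fst ` set r')))"

definition Inv :: "nat \<Rightarrow> letter list set \<Rightarrow> nat set \<Rightarrow> (nat \<Rightarrow> letter list) \<Rightarrow> bool" where
  "Inv n R X g \<longleftrightarrow> X \<subseteq> gensR R \<and> (\<forall>i. i \<notin> X \<longrightarrow> g i = [(i, False)]) \<and>
     (\<forall>i\<in>X. \<forall>l\<in>set (g i). fst l \<notin> X \<and> fst l \<in> gensR R) \<and>
     (\<forall>r\<in>R. (subst g r, []) \<in> pres_eq n {}) \<and>
     (\<forall>i<n. (g i, [(i, False)]) \<in> pres_eq n R)"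

lemma gensR_words: "R \<subseteq> words n \<Longrightarrow> gensR R \<subseteq> {..<n}"
  by (auto simp: gensR_def words_def)

lemma Inv_words: assumes "Inv n R X g" "R \<subseteq> words n" "i < n" shows "g i \<in> words n"
proof (cases "i \<in> X")
  case True
  then have "\<forall>l\<in>set (g i). fst l \<in> gensR R" using assms(1) unfolding Inv_def by blast
  then show ?thesis using gensR_words[OF assms(2)] unfolding words_def by blast
next
  case False
  then have "g i = [(i, False)]" using assms(1) unfolding Inv_def by blast
  then show ?thesis using assms(3) by simp
qed

lemma subst_equiv: assumes "\<And>i. i < n \<Longrightarrow> (g i, [(i, False)]) \<in> pres_eq n R"
  and "\<And>i. i < n \<Longrightarrow> g i \<in> words n" and "w \<in> words n"
  shows "(subst g w, w) \<in> pres_eq n R"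
  using assms(3)
proof (induction w)
  case (Cons l w)
  obtain i b where l: "l = (i, b)" by force
  have i: "i < n" using Cons l by auto
  have e: "(ext g l, [l]) \<in> pres_eq n R"
  proof (cases b)
    case True
    then show ?thesis using invw_single[OF assms(1)[OF i] assms(2)[OF i]] i l
      by (simp add: ext_def inv_letter_def)
  next
    case False
    then show ?thesis using assms(1)[OF i] l by (simp add: ext_def)
  qed
  have "ext g l \<in> words n" using assms(2) i l by (simp add: ext_def)
  then show ?case using pres_eq_app[OF e Cons.IH] Cons by simp
qed simp

lemma good_subset: assumes "good R" "R' \<subseteq> R" shows "good R'"
  unfolding good_def
proof (intro allI impI)
  fix S assume "S \<subseteq> R'" "S \<noteq> {}"
  then have "S \<subseteq> R" "S \<noteq> {}" using assms(2) by auto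
  then show "\<exists>r\<in>S. \<exists>x. length (filter (\<lambda>l. fst l = x) r) = 1 \<and> (\<forall>r'\<in>S - {r}. x \<notin> fst ` set r')"
    using assms(1) unfolding good_def by blast
qed

lemma Inv_exists: "finite R \<Longrightarrow> R \<subseteq> words n \<Longrightarrow> good R \<Longrightarrow> \<exists>X g. Inv n R X g"
proof (induction R rule: finite_psubset_induct)
  case (psubset R)
  show ?case
  proof (cases "R = {}")
    case True
    then have "Inv n R {} (\<lambda>i. [(i, False)])" by (simp add: Inv_def)
    then show ?thesis by blast
  next
    case False
    then obtain r x where r: "r \<in> R" "length (filter (\<lambda>l. fst l = x) r) = 1"
      and others: "\<forall>r'\<in>R - {r}. x \<notin> fst ` set r'"
      using psubset.prems(2) unfolding good_def by blast
    let ?R' = "R - {r}"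
    have "\<exists>X g. Inv n ?R' X g"
      using psubset.IH[of ?R'] r psubset.prems good_subset[of R ?R'] by auto
    then obtain X' g' where inv': "Inv n ?R' X' g'" by blast
    from r(2) obtain y where "filter (\<lambda>l. fst l = x) r = [y]"
      by (metis length_0_conv length_Suc_conv One_nat_def)
    then obtain u w where ruw: "r = u @ y # w" and u: "\<forall>l\<in>set u. fst l \<noteq> x"
      and y: "fst y = x" and "[] = filter (\<lambda>l. fst l = x) w"
      by (auto simp: filter_eq_Cons_iff)
    then have w: "\<forall>l\<in>set w. fst l \<noteq> x" by (metis (mono_tags) filter_empty_conv)
    have rw: "r \<in> words n" using r psubset.prems by auto
    then have uw: "u \<in> words n" "w \<in> words n" "fst y < n" using ruw by auto
    have i1: "X' \<subseteq> gensR ?R'" and i2: "\<And>i. i \<notin> X' \<Longrightarrow> g' i = [(i, False)]"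
      and i3: "\<And>i l. i \<in> X' \<Longrightarrow> l \<in> set (g' i) \<Longrightarrow> fst l \<notin> X' \<and> fst l \<in> gensR ?R'"
      and i4: "\<And>r. r \<in> ?R' \<Longrightarrow> (subst g' r, []) \<in> pres_eq n {}"
      and i5: "\<And>i. i < n \<Longrightarrow> (g' i, [(i, False)]) \<in> pres_eq n ?R'"
      using inv' unfolding Inv_def by blast+
    have xR': "x \<notin> gensR ?R'" using others by (auto simp: gensR_def)
    have xX': "x \<notin> X'" using i1 xR' by blast
    have gR': "gensR ?R' \<subseteq> gensR R" by (auto simp: gensR_def)
    have g'w: "\<And>i. i < n \<Longrightarrow> g' i \<in> words n"
      using Inv_words[OF inv'] psubset.prems by auto
    define s where "s = invw u @ invw w"
    define g where "g = g'(x := (if snd y then invw (subst g' s) else subst g' s))"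
    have yx: "y = (x, snd y)" using y by (cases y) auto
    have ext_y: "ext g y = subst g' s"
      by (subst yx) (simp add: ext_def g_def)
    have gu: "subst g u = subst g' u" "subst g w = subst g' w"
      using u w by (auto simp: g_def intro!: subst_cong)
    let ?X = "insert x X'"
    have xg: "x \<in> gensR R" using r ruw y unfolding gensR_def by force
    have I1: "?X \<subseteq> gensR R" using i1 gR' xg by blast
    have I2: "\<forall>i. i \<notin> ?X \<longrightarrow> g i = [(i, False)]" using i2 by (simp add: g_def)
    have I3: "\<forall>i\<in>?X. \<forall>l\<in>set (g i). fst l \<notin> ?X \<and> fst l \<in> gensR R"
    proof (intro ballI)
      fix i l assume i: "i \<in> ?X" and l: "l \<in> set (g i)"
      show "fst l \<notin> ?X \<and> fst l \<in> gensR R"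
      proof (cases "i = x")
        case True
        have "fst ` set (g x) = fst ` set (subst g' s)"
          by (cases "snd y") (simp_all add: g_def)
        then have "fst l \<in> fst ` set (subst g' s)" using l True by (metis image_eqI)
        then obtain l' where l': "l' \<in> set (subst g' s)" "fst l = fst l'" by auto
        from subst_fst[OF l'(1)] obtain l0 where l0: "l0 \<in> set s" "fst l \<in> fst ` set (g' (fst l0))"
          using l'(2) by auto
        have "fst l0 \<in> fst ` set s" using l0(1) by simp
        then have l0uw: "fst l0 \<in> fst ` set u \<union> fst ` set w" unfolding s_def
          by (simp add: image_Un)
        moreover have "fst ` set u \<union> fst ` set w \<subseteq> fst ` set r" using ruw by auto
        ultimately have l0g: "fst l0 \<in> gensR R" using r(1) unfolding gensR_def by blast
        have l0x: "fst l0 \<noteq> x" using u w l0uw by fastforce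
        show ?thesis
        proof (cases "fst l0 \<in> X'")
          case True
          then obtain l1 where "l1 \<in> set (g' (fst l0))" "fst l = fst l1" using l0(2) by auto
          then have "fst l \<notin> X' \<and> fst l \<in> gensR ?R'" using i3[OF True] by metis
          then show ?thesis using xR' gR' by blast
        next
          case False
          then have "g' (fst l0) = [(fst l0, False)]" using i2 by blast
          then show ?thesis using l0 l0x l0g False by auto
        qed
      next
        case False
        then have "i \<in> X'" "g i = g' i" using i by (auto simp: g_def)
        then have "fst l \<notin> X' \<and> fst l \<in> gensR ?R'" using i3 l by metis
        then show ?thesis using xR' gR' by blast
      qed
    qed
    have I4: "\<forall>r'\<in>R. (subst g r', []) \<in> pres_eq n {}"
    proof
      fix r' assume r': "r' \<in> R"
      show "(subst g r', []) \<in> pres_eq n {}"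
      proof (cases "r' = r")
        case True
        let ?U = "subst g' u" and ?W = "subst g' w"
        have UW: "?U \<in> words n" "?W \<in> words n" using subst_words[OF g'w] uw by auto
        have "subst g r' = ?U @ invw ?U @ (invw ?W @ ?W)"
          using True ruw gu ext_y by (simp add: s_def subst_invw)
        moreover have "(?U @ invw ?U @ (invw ?W @ ?W), [] @ []) \<in> pres_eq n {}"
          using pres_eq_app[OF cancel_r[OF UW(1)] cancel_l[OF UW(2)]] UW by simp
        ultimately show ?thesis by simp
      next
        case False
        have "x \<notin> fst ` set r'" using others r' False by blast
        then have "subst g r' = subst g' r'"
          by (intro subst_cong) (metis fun_upd_other image_eqI g_def)
        then show ?thesis using i4 r' False by simp
      qed
    qed
    have I5: "\<forall>i<n. (g i, [(i, False)]) \<in> pres_eq n R"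
    proof (intro allI impI)
      fix i assume i: "i < n"
      show "(g i, [(i, False)]) \<in> pres_eq n R"
      proof (cases "i = x")
        case False
        then show ?thesis using i5[OF i] pres_eq_mono[of ?R' R] by (auto simp: g_def)
      next
        case True
        have sw: "s \<in> words n" using uw by (simp add: s_def)
        have c1: "(invw u @ u @ ([y] @ w @ invw w), [] @ [y]) \<in> pres_eq n R"
          using pres_eq_app[OF cancel_l[OF uw(1)] pres_eq_ctx[OF cancel_r[OF uw(2)], of "[y]" "[]"]] uw
          by simp
        have c2: "(invw u @ r @ invw w, invw u @ invw w) \<in> pres_eq n R"
          using rel_red[of "invw u" n "invw w" r R] uw r by simp
        have eq: "invw u @ r @ invw w = invw u @ u @ ([y] @ w @ invw w)" using ruw by simp
        have sy: "(s, [y]) \<in> pres_eq n R"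
          using pres_eq_trans[OF pres_eq_sym[OF c2[unfolded eq]] c1] by (simp add: s_def)
        have g'R: "\<And>i. i < n \<Longrightarrow> (g' i, [(i, False)]) \<in> pres_eq n R"
          using i5 pres_eq_mono[of ?R' R] by blast
        have sgy: "(subst g' s, [y]) \<in> pres_eq n R"
          using pres_eq_trans[OF subst_equiv[OF g'R g'w sw] sy] .
        have sgw: "subst g' s \<in> words n" using subst_words[OF g'w sw] .
        show ?thesis
        proof (cases "snd y")
          case True
          then have y2: "y = (x, True)" using yx by simp
          have "g x = invw (subst g' s)" using True by (simp add: g_def)
          moreover have "(invw (subst g' s), [inv_letter y]) \<in> pres_eq n R"
            using invw_single[OF sgy sgw] uw by simp
          ultimately show ?thesis using y2 \<open>i = x\<close> by (simp add: inv_letter_def)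
        next
          case False
          then have y2: "y = (x, False)" using yx by simp
          have "g x = subst g' s" using False by (simp add: g_def)
          then show ?thesis using sgy y2 \<open>i = x\<close> by simp
        qed
      qed
    qed
    have "Inv n R ?X g" unfolding Inv_def using I1 I2 I3 I4 I5 by (intro conjI)
    then show ?thesis by blast
  qed
qed


lemma hom_funcset: "h \<in> hom G H \<Longrightarrow> h ` carrier G \<subseteq> carrier H"
  unfolding hom_def by auto

lemma good_free: assumes fin: "finite R" and Rw: "R \<subseteq> words n" and gd: "good R"
  shows "is_free_group (presented_group n R)"
proof -
  obtain X g where inv: "Inv n R X g" using Inv_exists[OF fin Rw gd] by blast
  have i1: "X \<subseteq> gensR R" and i2: "\<And>i. i \<notin> X \<Longrightarrow> g i = [(i, False)]"
      and i3: "\<And>i l. i \<in> X \<Longrightarrow> l \<in> set (g i) \<Longrightarrow> fst l \<notin> X \<and> fst l \<in> gensR R"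
      and i4: "\<And>r. r \<in> R \<Longrightarrow> (subst g r, []) \<in> pres_eq n {}"
      and i5: "\<And>i. i < n \<Longrightarrow> (g i, [(i, False)]) \<in> pres_eq n R"
      using inv unfolding Inv_def by blast+
  have gw: "\<And>i. i < n \<Longrightarrow> g i \<in> words n" using Inv_words[OF inv Rw] .
  have gRn: "gensR R \<subseteq> {..<n}" using gensR_words[OF Rw] .
  define Y where "Y = {..<n} - X"
  have finY: "finite Y" by (simp add: Y_def)
  obtain h where h: "bij_betw h Y {0..<card Y}" using ex_bij_betw_finite_nat[OF finY] by blast
  define k where "k = card Y"
  define \<sigma> where "\<sigma> = inv_into Y h"
  have hY: "\<And>j. j \<in> Y \<Longrightarrow> h j < k" using h unfolding k_def bij_betw_def by auto
  have sh: "\<And>j. j \<in> Y \<Longrightarrow> \<sigma> (h j) = j" using h unfolding \<sigma>_def bij_betw_def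
    by (simp add: inv_into_f_f)
  have hs: "\<And>j. j < k \<Longrightarrow> h (\<sigma> j) = j" using h unfolding \<sigma>_def bij_betw_def k_def
    by (simp add: f_inv_into_f)
  have sY: "\<And>j. j < k \<Longrightarrow> \<sigma> j \<in> Y" using h unfolding \<sigma>_def bij_betw_def k_def
    by (metis atLeastLessThan_iff inv_into_into le0)
  define \<rho> where "\<rho> j = (if j \<in> Y then [(h j, False)] else [])" for j
  define gg where "gg i = subst \<rho> (g i)" for i
  have gg_eq: "gg = (\<lambda>i. subst \<rho> (g i))" by (rule HOL.ext) (simp add: gg_def)
  define gf where "gf j = [(\<sigma> j, False)]" for j
  have \<rho>w: "\<And>j. \<rho> j \<in> words k" using hY by (simp add: \<rho>_def)
  have ggw: "\<And>i. i < n \<Longrightarrow> gg i \<in> words k"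
    unfolding gg_def using subst_words[of n \<rho> k] \<rho>w gw by blast
  have ggrel: "\<And>r. r \<in> R \<Longrightarrow> (subst gg r, []) \<in> pres_eq k {}"
  proof -
    fix r assume r: "r \<in> R"
    have "(subst \<rho> (subst g r), subst \<rho> []) \<in> pres_eq k {}"
      using subst_resp[of n \<rho> k "{}" "{}", OF \<rho>w _ i4[OF r]] by simp
    moreover have "gg = (\<lambda>i. subst \<rho> (g i))" by (rule HOL.ext) (simp add: gg_def)
    ultimately show "(subst gg r, []) \<in> pres_eq k {}" by (simp add: subst_subst)
  qed
  have gfw: "\<And>j. j < k \<Longrightarrow> gf j \<in> words n" using sY by (simp add: gf_def Y_def)
  let ?G = "presented_group n R" and ?F = "presented_group k {}"
  define T2 where "T2 = Theta gg k {}"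
  define T1 where "T1 = Theta gf n R"
  have T2hom: "T2 \<in> hom ?G ?F" unfolding T2_def by (rule Theta_hom[OF ggw ggrel Rw]) simp_all
  have T1hom: "T1 \<in> hom ?F ?G" unfolding T1_def by (rule Theta_hom[OF gfw _ _ Rw]) simp_all
  have T2c: "\<And>a. T2 (cls n R a) = cls k {} (subst gg a)"
    unfolding T2_def by (rule Theta_cls[OF ggw ggrel])
  have T1c: "\<And>b. T1 (cls k {} b) = cls n R (subst gf b)"
    unfolding T1_def by (rule Theta_cls[OF gfw]) auto
  have overY: "\<And>v. (\<forall>l\<in>set v. fst l \<in> Y) \<Longrightarrow> subst gf (subst \<rho> v) = v"
  proof -
    fix v :: "letter list" assume v: "\<forall>l\<in>set v. fst l \<in> Y"
    have "subst gf (subst \<rho> v) = subst (\<lambda>j. subst gf (\<rho> j)) v" by (rule subst_subst)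
    also have "\<dots> = v"
      by (rule subst_id) (use v sh in \<open>auto simp: \<rho>_def gf_def ext_def\<close>)
    finally show "subst gf (subst \<rho> v) = v" .
  qed
  have sgY: "\<And>a. a \<in> words n \<Longrightarrow> \<forall>l\<in>set (subst g a). fst l \<in> Y"
  proof (intro ballI)
    fix a l assume a: "a \<in> words n" and l: "l \<in> set (subst g a)"
    from subst_fst[OF l] obtain l0 where l0: "l0 \<in> set a" "fst l \<in> fst ` set (g (fst l0))" by blast
    have "fst l0 < n" using a l0 by (auto simp: words_def)
    show "fst l \<in> Y"
    proof (cases "fst l0 \<in> X")
      case True
      then show ?thesis using i3[OF True] l0(2) gRn unfolding Y_def by force
    next
      case False
      then show ?thesis using i2[OF False] l0(2) \<open>fst l0 < n\<close> unfolding Y_def by auto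
    qed
  qed
  have inv1: "\<And>A. A \<in> carrier ?G \<Longrightarrow> T1 (T2 A) = A"
  proof -
    fix A assume "A \<in> carrier ?G"
    then obtain a where a: "a \<in> words n" "A = cls n R a" by (auto simp: carrier_pg)
    have "T1 (T2 A) = cls n R (subst gf (subst \<rho> (subst g a)))"
      using a T1c T2c by (simp add: gg_eq subst_subst)
    also have "\<dots> = cls n R (subst g a)" using overY sgY[OF a(1)] by simp
    also have "\<dots> = A" using a subst_equiv[OF i5 gw a(1)] by (simp add: cls_eqI)
    finally show "T1 (T2 A) = A" .
  qed
  have inv2: "\<And>B. B \<in> carrier ?F \<Longrightarrow> T2 (T1 B) = B"
  proof -
    fix B assume "B \<in> carrier ?F"
    then obtain b where b: "b \<in> words k" "B = cls k {} b" by (auto simp: carrier_pg)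
    have "T2 (T1 B) = cls k {} (subst (\<lambda>j. subst gg (gf j)) b)"
      using b T1c T2c by (simp add: subst_subst)
    also have "subst (\<lambda>j. subst gg (gf j)) b = b"
    proof (rule subst_id)
      fix l assume "l \<in> set b"
      then have j: "fst l < k" using b by (auto simp: words_def)
      have "\<sigma> (fst l) \<notin> X" using sY[OF j] by (simp add: Y_def)
      then show "subst gg (gf (fst l)) = [(fst l, False)]"
        using sY[OF j] hs[OF j] i2 by (simp add: gf_def gg_def ext_def \<rho>_def)
    qed
    finally show "T2 (T1 B) = B" using b by simp
  qed
  have "bij_betw T2 (carrier ?G) (carrier ?F)"
    using inv1 inv2 hom_funcset[OF T2hom] hom_funcset[OF T1hom] by (intro bij_betw_byWitness) auto
  then have "T2 \<in> iso ?G ?F" using T2hom by (simp add: iso_def)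
  then have "?G \<cong> free_group_rank k" by (auto simp: is_iso_def free_group_rank_def)
  then show ?thesis by (auto simp: is_free_group_def)
qed


definition WV :: "nat \<Rightarrow> nat set \<Rightarrow> letter list set" where
  "WV n V = {w \<in> tri_words n. \<forall>l\<in>set w. fst l \<in> V}"

definition kk :: "nat \<Rightarrow> nat" where "kk v = (2 * v + 2) div 3"

definition occ :: "nat \<Rightarrow> letter list \<Rightarrow> nat" where
  "occ i r = length (filter (\<lambda>l. fst l = i) r)"

lemma tri_words_len: "w \<in> tri_words n \<Longrightarrow> length w = 3 \<and> w \<in> words n"
  by (auto simp: tri_words_def)

lemma lists3_card: assumes "finite V"
  shows "finite {w :: letter list. length w = 3 \<and> (\<forall>l\<in>set w. fst l \<in> V)} \<and>
         card {w :: letter list. length w = 3 \<and> (\<forall>l\<in>set w. fst l \<in> V)} \<le> (2 * card V) ^ 3"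
proof -
  let ?L = "V \<times> (UNIV :: bool set)"
  have cL: "card ?L = 2 * card V" by (simp add: card_cartesian_product)
  have sub: "{w :: letter list. length w = 3 \<and> (\<forall>l\<in>set w. fst l \<in> V)} \<subseteq>
      (\<lambda>(a, b, c). [a, b, c]) ` (?L \<times> ?L \<times> ?L)"
  proof
    fix w :: "letter list" assume "w \<in> {w. length w = 3 \<and> (\<forall>l\<in>set w. fst l \<in> V)}"
    then obtain a b c where "w = [a, b, c]" "fst a \<in> V" "fst b \<in> V" "fst c \<in> V"
      by (auto simp: numeral_3_eq_3 length_Suc_conv)
    then show "w \<in> (\<lambda>(a, b, c). [a, b, c]) ` (?L \<times> ?L \<times> ?L)"
      by (auto intro!: image_eqI[of _ _ "(a, b, c)"] simp: mem_Times_iff)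
  qed
  have fin: "finite (?L \<times> ?L \<times> ?L)" using assms by simp
  have "card ((\<lambda>(a, b, c). [a, b, c]) ` (?L \<times> ?L \<times> ?L)) \<le> card (?L \<times> ?L \<times> ?L)"
    by (rule card_image_le[OF fin])
  also have "\<dots> = (2 * card V) ^ 3" using cL by (simp add: card_cartesian_product power3_eq_cube)
  finally show ?thesis using card_mono[OF finite_imageI[OF fin] sub] finite_subset[OF sub] fin by auto
qed

lemma WV_card: assumes "finite V" shows "finite (WV n V) \<and> card (WV n V) \<le> (2 * card V) ^ 3"
proof -
  have "WV n V \<subseteq> {w :: letter list. length w = 3 \<and> (\<forall>l\<in>set w. fst l \<in> V)}"
    unfolding WV_def using tri_words_len by auto
  then show ?thesis using lists3_card[OF assms] by (meson card_mono finite_subset le_trans)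
qed

lemma tri_finite: "finite (tri_words n)"
proof -
  have "tri_words n \<subseteq> WV n {..<n}" unfolding WV_def using tri_words_len
    by (auto simp: words_def)
  then show ?thesis using WV_card[of "{..<n}" n] finite_subset by auto
qed

lemma occ_Cons: "occ i (l # r) = (if fst l = i then 1 else 0) + occ i r"
  by (simp add: occ_def)

lemma sum_occ: "finite V \<Longrightarrow> fst ` set r \<subseteq> V \<Longrightarrow> (\<Sum>i\<in>V. occ i r) = length r"
proof (induction r)
  case Nil then show ?case by (simp add: occ_def)
next
  case (Cons l r)
  have "(\<Sum>i\<in>V. occ i (l # r)) = (\<Sum>i\<in>V. (if fst l = i then 1 else 0)) + (\<Sum>i\<in>V. occ i r)"
    by (simp add: occ_Cons sum.distrib)
  also have "(\<Sum>i\<in>V. (if fst l = i then 1 else 0 :: nat)) = 1" using Cons.prems by simp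
  finally show ?case using Cons by simp
qed

lemma occ_pos: "i \<in> fst ` set r \<Longrightarrow> 1 \<le> occ i r"
  unfolding occ_def by (metis (mono_tags, lifting) filter_empty_conv image_iff length_0_conv less_one not_le)

lemma not_good: assumes R: "R \<subseteq> tri_words n" and ng: "\<not> good R"
  shows "\<exists>V. V \<subseteq> {..<n} \<and> V \<noteq> {} \<and> (\<exists>B. B \<subseteq> R \<and> B \<subseteq> WV n V \<and> card B = kk (card V))"
proof -
  obtain S where S: "S \<subseteq> R" "S \<noteq> {}" and
     S3: "\<not> (\<exists>r\<in>S. \<exists>x. length (filter (\<lambda>l. fst l = x) r) = 1 \<and> (\<forall>r'\<in>S - {r}. x \<notin> fst ` set r'))"
    using ng unfolding good_def by blast
  have np: "\<And>r x. r \<in> S \<Longrightarrow> occ x r = 1 \<Longrightarrow> \<exists>r'\<in>S - {r}. x \<in> fst ` set r'"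
    using S3 unfolding occ_def by blast
  have St: "\<And>r. r \<in> S \<Longrightarrow> r \<in> tri_words n" using S R by blast
  have finS: "finite S" using finite_subset[OF S(1)] finite_subset[OF R tri_finite] by blast
  define V where "V = gensR S"
  have finV: "finite V" unfolding V_def gensR_def using finS by auto
  have Vn: "V \<subseteq> {..<n}"
  proof
    fix i assume "i \<in> V"
    then obtain r l where "r \<in> S" "l \<in> set r" "i = fst l" unfolding V_def gensR_def by blast
    then show "i \<in> {..<n}" using tri_words_len[OF St] by (auto simp: words_def)
  qed
  obtain r0 where r0: "r0 \<in> S" using S by blast
  then have "length r0 = 3" using tri_words_len[OF St] by blast
  then obtain l0 where "l0 \<in> set r0" by (cases r0) auto
  then have Vne: "V \<noteq> {}" using r0 unfolding V_def gensR_def by blast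
  have SW: "S \<subseteq> WV n V"
  proof
    fix r assume r: "r \<in> S"
    have "\<forall>l\<in>set r. fst l \<in> V" using r unfolding V_def gensR_def by blast
    then show "r \<in> WV n V" using St[OF r] unfolding WV_def by blast
  qed
  have two: "\<And>i. i \<in> V \<Longrightarrow> 2 \<le> (\<Sum>r\<in>S. occ i r)"
  proof -
    fix i assume "i \<in> V"
    then obtain r where r: "r \<in> S" "i \<in> fst ` set r" unfolding V_def gensR_def by blast
    have o1: "1 \<le> occ i r" using occ_pos[OF r(2)] .
    show "2 \<le> (\<Sum>r\<in>S. occ i r)"
    proof (cases "occ i r = 1")
      case True
      then obtain r' where r': "r' \<in> S - {r}" "i \<in> fst ` set r'" using np[OF r(1)] by blast
      have "(\<Sum>r\<in>{r, r'}. occ i r) \<le> (\<Sum>r\<in>S. occ i r)"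
        using r r' finS by (intro sum_mono2) auto
      moreover have "(\<Sum>r\<in>{r, r'}. occ i r) = occ i r + occ i r'"
      proof -
        have "r \<notin> {r'}" using r' by auto
        then show ?thesis by (simp add: sum.insert)
      qed
      ultimately show ?thesis using o1 occ_pos[OF r'(2)] by linarith
    next
      case False
      then have "2 \<le> occ i r" using o1 by linarith
      also have "occ i r \<le> (\<Sum>r\<in>S. occ i r)" using r finS by (intro member_le_sum) auto
      finally show ?thesis .
    qed
  qed
  have "2 * card V = (\<Sum>i\<in>V. 2)" by simp
  also have "\<dots> \<le> (\<Sum>i\<in>V. \<Sum>r\<in>S. occ i r)" using two by (intro sum_mono) auto
  also have "\<dots> = (\<Sum>r\<in>S. \<Sum>i\<in>V. occ i r)" by (rule sum.swap)
  also have "\<dots> = (\<Sum>r\<in>S. 3)"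
  proof (rule sum.cong[OF refl])
    fix r assume "r \<in> S"
    then have "fst ` set r \<subseteq> V" "length r = 3" unfolding V_def gensR_def
      using tri_words_len[OF St] by blast+
    then show "(\<Sum>i\<in>V. occ i r) = 3" using sum_occ[OF finV] by simp
  qed
  also have "\<dots> = 3 * card S" by simp
  finally have "2 * card V \<le> 3 * card S" .
  moreover have "3 * kk (card V) + (2 * card V + 2) mod 3 = 2 * card V + 2"
    unfolding kk_def using div_mult_mod_eq[of "2 * card V + 2" 3] by linarith
  ultimately have "kk (card V) \<le> card S" by linarith
  then obtain B where "B \<subseteq> S" "card B = kk (card V)" using obtain_subset_with_card_n by metis
  then have "B \<subseteq> R \<and> B \<subseteq> WV n V \<and> card B = kk (card V)" using SW S by blast
  then show ?thesis using Vn Vne by blast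
qed


lemma pow_sum: "finite A \<Longrightarrow> (\<Sum>R\<in>Pow A. p ^ card R * q ^ (card A - card R)) = (p + q :: real) ^ card A"
proof (induction A rule: finite_induct)
  case empty then show ?case by simp
next
  case (insert a A)
  have inj: "inj_on (insert a) (Pow A)" unfolding inj_on_def
  proof (intro ballI impI)
    fix x y assume "x \<in> Pow A" "y \<in> Pow A" "insert a x = insert a y"
    then show "x = y" using insert.hyps(2) by (meson PowD insert_ident subsetD)
  qed
  have disj: "Pow A \<inter> insert a ` Pow A = {}" using insert.hyps by blast
  have fin: "finite (Pow A)" "finite (insert a ` Pow A)" using insert.hyps by auto
  have cR: "\<And>R. R \<in> Pow A \<Longrightarrow> card (insert a R) = Suc (card R) \<and> card R \<le> card A"
  proof -
    fix R assume "R \<in> Pow A"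
    then have "R \<subseteq> A" by simp
    moreover have "finite R" using \<open>R \<subseteq> A\<close> insert.hyps(1) finite_subset by blast
    moreover have "a \<notin> R" using \<open>R \<subseteq> A\<close> insert.hyps(2) by blast
    ultimately show "card (insert a R) = Suc (card R) \<and> card R \<le> card A"
      using insert.hyps by (auto intro: card_mono)
  qed
  have "(\<Sum>R\<in>Pow (insert a A). p ^ card R * q ^ (card (insert a A) - card R)) =
      (\<Sum>R\<in>Pow A. p ^ card R * q ^ (Suc (card A) - card R)) +
      (\<Sum>R\<in>insert a ` Pow A. p ^ card R * q ^ (Suc (card A) - card R))"
    unfolding Pow_insert using insert.hyps by (simp add: sum.union_disjoint[OF fin disj])
  also have "(\<Sum>R\<in>insert a ` Pow A. p ^ card R * q ^ (Suc (card A) - card R)) =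
      (\<Sum>R\<in>Pow A. p ^ card (insert a R) * q ^ (Suc (card A) - card (insert a R)))"
    by (rule sum.reindex[OF inj, unfolded comp_def])
  also have "\<dots> = p * (\<Sum>R\<in>Pow A. p ^ card R * q ^ (card A - card R))"
    unfolding sum_distrib_left by (rule sum.cong[OF refl]) (simp add: cR)
  also have "(\<Sum>R\<in>Pow A. p ^ card R * q ^ (Suc (card A) - card R)) =
      q * (\<Sum>R\<in>Pow A. p ^ card R * q ^ (card A - card R))"
    unfolding sum_distrib_left by (rule sum.cong[OF refl]) (simp add: cR Suc_diff_le)
  finally show ?case using insert by (simp add: algebra_simps)
qed

lemma sup_sum: assumes A: "finite A" and B: "B \<subseteq> A"
  shows "(\<Sum>R\<in>Pow A. if B \<subseteq> R then p ^ card R * (1 - p) ^ (card A - card R) else 0) = (p :: real) ^ card B"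
proof -
  have finB: "finite B" using A B finite_subset by blast
  have "(\<Sum>R\<in>Pow A. if B \<subseteq> R then p ^ card R * (1 - p) ^ (card A - card R) else 0) =
      (\<Sum>R\<in>{R \<in> Pow A. B \<subseteq> R}. p ^ card R * (1 - p) ^ (card A - card R))"
    by (rule sum.inter_filter[symmetric]) (simp add: A)
  also have "\<dots> = (\<Sum>R'\<in>Pow (A - B). p ^ card (B \<union> R') * (1 - p) ^ (card A - card (B \<union> R')))"
    by (rule sum.reindex_bij_witness[of _ "\<lambda>R'. B \<union> R'" "\<lambda>R. R - B"]) (use B in \<open>auto simp: Un_absorb1\<close>)
  also have "\<dots> = (\<Sum>R'\<in>Pow (A - B). p ^ card B * (p ^ card R' * (1 - p) ^ (card (A - B) - card R')))"
  proof (rule sum.cong[OF refl])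
    fix R' assume "R' \<in> Pow (A - B)"
    then have R': "R' \<subseteq> A - B" by simp
    have finR: "finite R'" using R' A finite_subset by blast
    have c1: "card (B \<union> R') = card B + card R'"
      using R' finB finR by (subst card_Un_disjoint) auto
    have c2: "card (A - B) = card A - card B" using B finB by (simp add: card_Diff_subset)
    have "card R' \<le> card (A - B)" using R' A by (intro card_mono) auto
    then have "card A - card (B \<union> R') = card (A - B) - card R'" using c1 c2 by simp
    then show "p ^ card (B \<union> R') * (1 - p) ^ (card A - card (B \<union> R')) =
        p ^ card B * (p ^ card R' * (1 - p) ^ (card (A - B) - card R'))"
      by (simp add: c1 power_add)
  qed
  also have "\<dots> = p ^ card B" using pow_sum[of "A - B" p "1 - p"] A
    by (simp add: sum_distrib_left[symmetric])
  finally show ?thesis .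
qed


definition Vs :: "nat \<Rightarrow> nat set set" where "Vs n = {V. V \<subseteq> {..<n} \<and> V \<noteq> {}}"
definition Bs :: "nat \<Rightarrow> nat set \<Rightarrow> letter list set set" where
  "Bs n V = {B. B \<subseteq> WV n V \<and> card B = kk (card V)}"

lemma finite_Vs: "finite (Vs n)" unfolding Vs_def by (rule finite_subset[of _ "Pow {..<n}"]) auto
lemma finite_Bs: "finite (Bs n V)"
proof -
  have "WV n V \<subseteq> tri_words n" by (auto simp: WV_def)
  then have "finite (WV n V)" using tri_finite finite_subset by blast
  then have "finite (Pow (WV n V))" by simp
  then show ?thesis unfolding Bs_def by (rule rev_finite_subset) auto
qed
lemma card_Bs: "card (Bs n V) = card (WV n V) choose kk (card V)"
proof -
  have "WV n V \<subseteq> tri_words n" by (auto simp: WV_def)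
  then have "finite (WV n V)" using tri_finite finite_subset by blast
  then show ?thesis unfolding Bs_def by (rule n_subsets)
qed

lemma main_bound: assumes p: "0 \<le> p" "p \<le> 1"
  shows "1 - prob_tri_free n p \<le> (\<Sum>V\<in>Vs n. real (card (WV n V) choose kk (card V)) * p ^ kk (card V))"
proof -
  let ?T = "tri_words n"
  define w where "w (R :: letter list set) = p ^ card R * (1 - p) ^ (card ?T - card R)" for R
  have w0: "\<And>R. 0 \<le> w R" unfolding w_def using p by simp
  have one: "(\<Sum>R\<in>Pow ?T. w R) = 1" unfolding w_def using pow_sum[OF tri_finite, of p "1 - p" n] by simp
  have prob: "prob_tri_free n p = (\<Sum>R\<in>Pow ?T. if is_free_group (presented_group n R) then w R else 0)"
    unfolding prob_tri_free_def w_def by simp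
  have "1 - prob_tri_free n p = (\<Sum>R\<in>Pow ?T. if is_free_group (presented_group n R) then 0 else w R)"
    unfolding prob one[symmetric] sum_subtractf[symmetric] by (rule sum.cong) auto
  also have "\<dots> \<le> (\<Sum>R\<in>Pow ?T. \<Sum>V\<in>Vs n. \<Sum>B\<in>Bs n V. if B \<subseteq> R then w R else 0)"
  proof (rule sum_mono)
    fix R assume R: "R \<in> Pow ?T"
    have nn: "0 \<le> (\<Sum>V\<in>Vs n. \<Sum>B\<in>Bs n V. if B \<subseteq> R then w R else 0)"
      using w0 by (intro sum_nonneg) auto
    show "(if is_free_group (presented_group n R) then 0 else w R) \<le>
        (\<Sum>V\<in>Vs n. \<Sum>B\<in>Bs n V. if B \<subseteq> R then w R else 0)"
    proof (cases "is_free_group (presented_group n R)")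
      case True then show ?thesis using nn by simp
    next
      case False
      have RT: "R \<subseteq> ?T" using R by simp
      have finR: "finite R" using RT tri_finite finite_subset by blast
      have Rw: "R \<subseteq> words n" using RT tri_words_len by blast
      have "\<not> good R" using False good_free[OF finR Rw] by blast
      then obtain V B where V: "V \<subseteq> {..<n}" "V \<noteq> {}" and B: "B \<subseteq> R" "B \<subseteq> WV n V" "card B = kk (card V)"
        using not_good[OF RT] by blast
      have VV: "V \<in> Vs n" using V by (simp add: Vs_def)
      have BB: "B \<in> Bs n V" using B by (simp add: Bs_def)
      have "w R = (if B \<subseteq> R then w R else 0)" using B by simp
      also have "\<dots> \<le> (\<Sum>B\<in>Bs n V. if B \<subseteq> R then w R else 0)"
        using BB w0 finite_Bs by (intro member_le_sum) auto
      also have "\<dots> \<le> (\<Sum>V\<in>Vs n. \<Sum>B\<in>Bs n V. if B \<subseteq> R then w R else 0)"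
        using VV w0 finite_Vs by (intro member_le_sum[of V _ "\<lambda>V. \<Sum>B\<in>Bs n V. if B \<subseteq> R then w R else 0"] sum_nonneg) auto
      finally show ?thesis using False by simp
    qed
  qed
  also have "\<dots> = (\<Sum>V\<in>Vs n. \<Sum>R\<in>Pow ?T. \<Sum>B\<in>Bs n V. if B \<subseteq> R then w R else 0)"
    by (rule sum.swap)
  also have "\<dots> = (\<Sum>V\<in>Vs n. \<Sum>B\<in>Bs n V. \<Sum>R\<in>Pow ?T. if B \<subseteq> R then w R else 0)"
    by (rule sum.cong[OF refl]) (rule sum.swap)
  also have "\<dots> = (\<Sum>V\<in>Vs n. \<Sum>B\<in>Bs n V. p ^ kk (card V))"
  proof (intro sum.cong[OF refl])
    fix V B assume "B \<in> Bs n V"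
    then have "B \<subseteq> ?T" "card B = kk (card V)" by (auto simp: Bs_def WV_def)
    then show "(\<Sum>R\<in>Pow ?T. if B \<subseteq> R then w R else 0) = p ^ kk (card V)"
      unfolding w_def using sup_sum[OF tri_finite, of B n p] by simp
  qed
  also have "\<dots> = (\<Sum>V\<in>Vs n. real (card (WV n V) choose kk (card V)) * p ^ kk (card V))"
    by (simp add: card_Bs)
  finally show ?thesis .
qed


lemma exp_term: assumes "0 \<le> (x::real)" shows "x ^ k / fact k \<le> exp x"
proof -
  have s: "summable (\<lambda>n. x ^ n / fact n)" using summable_exp[of x] by (simp add: field_simps)
  have "x ^ k / fact k = (\<Sum>n\<in>{k}. x ^ n / fact n)" by simp
  also have "\<dots> \<le> (\<Sum>n. x ^ n / fact n)"
    by (rule sum_le_suminf[OF s]) (use assms in auto)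
  also have "\<dots> = exp x" using exp_converges[of x] by (simp add: sums_iff field_simps)
  finally show ?thesis .
qed

lemma pow_fact3: "real v ^ v \<le> 3 ^ v * fact v"
proof -
  have "real v ^ v / fact v \<le> exp (real v)" by (rule exp_term) simp
  also have "exp (real v) = exp 1 ^ v" using exp_of_nat_mult[of v 1] by simp
  also have "\<dots> \<le> 3 ^ v" by (rule power_mono[OF exp_le]) simp
  finally show ?thesis by (simp add: divide_simps)
qed

lemma alg: assumes r: "0 < r" "r \<le> (1::real)" and vd: "v + d = 2 * k" "1 \<le> d" "2 * v \<le> 3 * k"
  shows "(3 / r) ^ v * (r ^ 2 / 64) ^ k \<le> r * (1 / 2) ^ v"
proof -
  have "(r ^ 2) ^ k = r ^ v * r ^ d" by (simp add: power_mult[symmetric] power_add[symmetric] vd(1))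
  then have e: "(3 / r) ^ v * (r ^ 2 / 64) ^ k = 3 ^ v * r ^ d / 64 ^ k"
    using r by (simp add: power_divide field_simps)
  have rd: "r ^ d \<le> r" using r vd(2) by (metis power_one_right power_decreasing less_le)
  have "(16::real) ^ v \<le> 64 ^ k"
  proof -
    have "(4::real) ^ (2 * v) \<le> 4 ^ (3 * k)" by (rule power_increasing[OF vd(3)]) simp
    then show ?thesis by (simp add: power_mult)
  qed
  have "3 ^ v * r ^ d / 64 ^ k \<le> 3 ^ v * r / 16 ^ v"
    using rd \<open>16 ^ v \<le> 64 ^ k\<close> r
    by (intro frac_le mult_left_mono) auto
  also have "\<dots> = r * (3 / 16) ^ v" by (simp add: power_divide)
  also have "\<dots> \<le> r * (1 / 2) ^ v" using r by (intro mult_left_mono power_mono) auto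
  finally show ?thesis using e by simp
qed

lemma term_bound: assumes v: "1 \<le> v" "v \<le> n" and k: "k = (2 * v + 2) div 3"
  shows "real n ^ v / fact v * (real ((2 * v) ^ 3) ^ k / fact k) * (1 / (2304 * real n ^ 2)) ^ k
     \<le> real v / real n * (1 / 2) ^ v"
proof -
  define x where "x = real v"
  define m where "m = real n"
  define K where "K = real k"
  have x0: "0 < x" "x \<le> m" using v by (auto simp: x_def m_def)
  have d: "3 * k + (2 * v + 2) mod 3 = 2 * v + 2" using k div_mult_mod_eq[of "2 * v + 2" 3] by linarith
  have mm: "(2 * v + 2) mod 3 < 3" by simp
  have k1: "2 * v \<le> 3 * k" "v + (2 * k - v) = 2 * k" "1 \<le> 2 * k - v" using d mm v by linarith+
  have A: "m ^ v / fact v \<le> (3 * m / x) ^ v"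
  proof -
    have "x ^ v \<le> 3 ^ v * fact v" unfolding x_def by (rule pow_fact3)
    then have h: "m ^ v * x ^ v \<le> 3 ^ v * m ^ v * fact v" using x0 mult_left_mono[of "x ^ v" _ "m ^ v"]
      by (simp add: mult.assoc mult.left_commute)
    have e: "(3 * m / x) ^ v = (3 ^ v * m ^ v) / x ^ v" by (simp add: power_divide power_mult_distrib)
    have fp: "(0::real) < fact v" by simp
    have xp: "0 < x ^ v" using x0 by simp
    show ?thesis unfolding e using h fp xp by (simp add: divide_le_eq le_divide_eq mult.commute mult.left_commute)
  qed
  have B: "(8 * x ^ 3) ^ k / fact k \<le> (36 * x ^ 2) ^ k"
  proof -
    have "(2 * x) ^ k \<le> (3 * K) ^ k" using k1(1) x0
      by (intro power_mono) (auto simp: x_def K_def)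
    then have h1: "2 ^ k * x ^ k \<le> 3 ^ k * K ^ k" by (simp only: power_mult_distrib)
    have h2: "3 ^ k * K ^ k \<le> 3 ^ k * (3 ^ k * fact k)" unfolding K_def by (intro mult_left_mono pow_fact3) auto
    have h3: "(3::real) ^ k * (3 ^ k * fact k) = 9 ^ k * fact k"
    proof -
      have "(3::real) ^ k * 3 ^ k = 9 ^ k" by (simp add: power_mult_distrib[symmetric])
      then show ?thesis by (metis mult.assoc)
    qed
    have h4: "2 ^ k * x ^ k \<le> 9 ^ k * fact k" using h1 h2 h3 by linarith
    have h5: "4 ^ k * (2 ^ k * x ^ k) \<le> 4 ^ k * (9 ^ k * fact k)" using h4 by (intro mult_left_mono) auto
    have e8: "(8::real) ^ k = 4 ^ k * 2 ^ k" by (simp add: power_mult_distrib[symmetric])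
    have e36: "(36::real) ^ k = 4 ^ k * 9 ^ k" by (simp add: power_mult_distrib[symmetric])
    have h6: "8 ^ k * x ^ k \<le> 36 ^ k * fact k" using h5 unfolding e8 e36 by (simp only: mult.assoc)
    have x2: "0 \<le> x ^ (2 * k)" using x0 by simp
    have h7: "x ^ (2 * k) * (8 ^ k * x ^ k) \<le> x ^ (2 * k) * (36 ^ k * fact k)"
      using mult_left_mono[OF h6 x2] .
    have l: "(8 * x ^ 3) ^ k = x ^ (2 * k) * (8 ^ k * x ^ k)"
    proof -
      have "(8 * x ^ 3) ^ k = 8 ^ k * x ^ (3 * k)" by (simp only: power_mult_distrib power_mult)
      also have "x ^ (3 * k) = x ^ (2 * k) * x ^ k"
        by (simp only: power_add[symmetric]) (simp add: algebra_simps)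
      finally show ?thesis by (simp only: mult.assoc mult.commute mult.left_commute)
    qed
    have r: "(36 * x ^ 2) ^ k * fact k = x ^ (2 * k) * (36 ^ k * fact k)"
      by (simp add: power_mult power_mult_distrib mult_ac power_even_eq[symmetric] power2_eq_square)
    have fp: "(0::real) < fact k" by simp
    show ?thesis using h7 unfolding l[symmetric] r[symmetric] by (simp add: divide_le_eq fp)
  qed
  have C0: "0 \<le> (1 / (2304 * m ^ 2)) ^ k" using x0 by simp
  have "real n ^ v / fact v * (real ((2 * v) ^ 3) ^ k / fact k) * (1 / (2304 * real n ^ 2)) ^ k
      = m ^ v / fact v * ((8 * x ^ 3) ^ k / fact k) * (1 / (2304 * m ^ 2)) ^ k"
    by (simp add: x_def m_def)
  also have "\<dots> \<le> (3 * m / x) ^ v * (36 * x ^ 2) ^ k * (1 / (2304 * m ^ 2)) ^ k"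
    using A B C0 x0 by (intro mult_right_mono mult_mono) auto
  also have "\<dots> = (3 / (x / m)) ^ v * ((x / m) ^ 2 / 64) ^ k"
  proof -
    have e1: "3 * m / x = 3 / (x / m)" using x0 by simp
    have e2: "36 * x ^ 2 * (1 / (2304 * m ^ 2)) = (x / m) ^ 2 / 64" using x0
      by (simp add: power_divide)
    have "(36 * x ^ 2) ^ k * (1 / (2304 * m ^ 2)) ^ k = ((x / m) ^ 2 / 64) ^ k"
      by (metis e2 power_mult_distrib)
    then show ?thesis unfolding e1 by (simp only: mult.assoc)
  qed
  also have "\<dots> \<le> (x / m) * (1 / 2) ^ v"
    using x0 k1 by (intro alg) auto
  finally show ?thesis by (simp add: x_def m_def)
qed

lemma geom_sum: "(\<Sum>v=1..n. real v * (1 / 2) ^ v) \<le> 2"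
proof -
  have "(\<Sum>v=1..n. real v * (1 / 2) ^ v) = 2 - (real n + 2) / 2 ^ n"
    by (induction n) (auto simp: field_simps)
  then show ?thesis by simp
qed


lemma choose_le: "real (N choose k) \<le> real N ^ k / fact k"
proof -
  have "real ((N choose k) * fact k) \<le> real (N ^ k)" using binomial_fact_pow[of N k] by (rule of_nat_mono)
  then have "real (N choose k) * fact k \<le> real N ^ k" by simp
  then show ?thesis by (simp add: le_divide_eq)
qed

lemma bound_n: assumes n: "1 \<le> n" and p: "0 \<le> p" "p \<le> 1" "p \<le> 1 / (2304 * real n ^ 2)"
  shows "1 - prob_tri_free n p \<le> 2 / real n"
proof -
  define q where "q = 1 / (2304 * real n ^ 2)"
  define Tm where "Tm v = real ((2 * v) ^ 3) ^ kk v / fact (kk v) * q ^ kk v" for v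
  have "1 - prob_tri_free n p \<le> (\<Sum>V\<in>Vs n. real (card (WV n V) choose kk (card V)) * p ^ kk (card V))"
    using main_bound[OF p(1,2)] .
  also have "\<dots> \<le> (\<Sum>V\<in>Vs n. Tm (card V))"
  proof (rule sum_mono)
    fix V assume V: "V \<in> Vs n"
    then have finV: "finite V" unfolding Vs_def using finite_subset by blast
    let ?N = "card (WV n V)" and ?k = "kk (card V)"
    have "real (?N choose ?k) \<le> real ?N ^ ?k / fact ?k" by (rule choose_le)
    also have "\<dots> \<le> real ((2 * card V) ^ 3) ^ ?k / fact ?k"
    proof -
      have "?N \<le> (2 * card V) ^ 3" using WV_card[OF finV, of n] by blast
      then have "real ?N \<le> real ((2 * card V) ^ 3)" by (rule of_nat_mono)
      then show ?thesis by (intro divide_right_mono power_mono) auto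
    qed
    finally have a: "real (?N choose ?k) \<le> real ((2 * card V) ^ 3) ^ ?k / fact ?k" .
    have b: "p ^ ?k \<le> q ^ ?k" using p by (intro power_mono) (auto simp: q_def)
    show "real (?N choose ?k) * p ^ ?k \<le> Tm (card V)"
      unfolding Tm_def using a b p by (intro mult_mono) auto
  qed
  also have "\<dots> = (\<Sum>v\<in>{1..n}. \<Sum>V\<in>{V \<in> Vs n. card V = v}. Tm (card V))"
  proof (rule sum.group[symmetric])
    show "finite (Vs n)" by (rule finite_Vs)
    show "finite {1..n}" by simp
    show "card ` Vs n \<subseteq> {1..n}"
    proof
      fix c assume "c \<in> card ` Vs n"
      then obtain V where V: "V \<in> Vs n" "c = card V" by blast
      then have "V \<subseteq> {..<n}" "V \<noteq> {}" by (auto simp: Vs_def)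
      then have fV: "finite V" using finite_subset by blast
      have "card V \<le> card {..<n}" by (rule card_mono) (simp_all add: \<open>V \<subseteq> {..<n}\<close>)
      then have "card V \<le> n" by simp
      moreover have "card V \<noteq> 0" using fV \<open>V \<noteq> {}\<close> by simp
      ultimately have "card V \<le> n" "card V \<noteq> 0" by blast+
      then show "c \<in> {1..n}" using V by auto
    qed
  qed
  also have "\<dots> = (\<Sum>v\<in>{1..n}. real (n choose v) * Tm v)"
  proof (rule sum.cong[OF refl])
    fix v assume v: "v \<in> {1..n}"
    have eq: "{V \<in> Vs n. card V = v} = {V. V \<subseteq> {..<n} \<and> card V = v}"
    proof (rule Set.set_eqI)
      fix V :: "nat set"
      have "card V = v \<Longrightarrow> V \<noteq> {}" using v by auto
      then show "V \<in> {V \<in> Vs n. card V = v} \<longleftrightarrow> V \<in> {V. V \<subseteq> {..<n} \<and> card V = v}"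
        unfolding Vs_def by blast
    qed
    have "(\<Sum>V\<in>{V \<in> Vs n. card V = v}. Tm (card V)) = (\<Sum>V\<in>{V \<in> Vs n. card V = v}. Tm v)"
      by (rule sum.cong) auto
    also have "\<dots> = real (card {V. V \<subseteq> {..<n} \<and> card V = v}) * Tm v" by (simp add: eq)
    also have "card {V. V \<subseteq> {..<n} \<and> card V = v} = n choose v" using n_subsets[of "{..<n}" v] by simp
    finally show "(\<Sum>V\<in>{V \<in> Vs n. card V = v}. Tm (card V)) = real (n choose v) * Tm v" .
  qed
  also have "\<dots> \<le> (\<Sum>v\<in>{1..n}. real v / real n * (1 / 2) ^ v)"
  proof (rule sum_mono)
    fix v assume v: "v \<in> {1..n}"
    have T0: "0 \<le> Tm v" by (simp add: Tm_def q_def)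
    have "real (n choose v) * Tm v \<le> real n ^ v / fact v * Tm v"
      using choose_le[of n v] T0 by (rule mult_right_mono)
    also have "\<dots> \<le> real v / real n * (1 / 2) ^ v"
    proof -
      have v1: "1 \<le> v" "v \<le> n" using v by auto
      have "kk v = (2 * v + 2) div 3" by (simp add: kk_def)
      from term_bound[OF v1 this] show ?thesis unfolding Tm_def q_def by (metis mult.assoc)
    qed
    finally show "real (n choose v) * Tm v \<le> real v / real n * (1 / 2) ^ v" .
  qed
  also have "\<dots> = (1 / real n) * (\<Sum>v\<in>{1..n}. real v * (1 / 2) ^ v)"
    by (simp add: sum_distrib_left)
  also have "\<dots> \<le> (1 / real n) * 2" using geom_sum[of n] n by (intro mult_left_mono) auto
  finally show ?thesis by simp
qed

lemma prob_le1: assumes "0 \<le> p" "p \<le> 1" shows "prob_tri_free n p \<le> 1"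
proof -
  have "prob_tri_free n p \<le> (\<Sum>R\<in>Pow (tri_words n). p ^ card R * (1 - p) ^ (card (tri_words n) - card R))"
    unfolding prob_tri_free_def using assms by (intro sum_mono) auto
  also have "\<dots> = 1" using pow_sum[OF tri_finite, of p "1 - p" n] by simp
  finally show ?thesis .
qed

theorem theorem1p1:
  shows "\<exists>c>0. \<forall>p :: nat \<Rightarrow> real.
           (\<forall>n. 0 \<le> p n \<and> p n \<le> 1) \<longrightarrow>
           (\<forall>n. p n \<le> c / (real n)^2) \<longrightarrow>
           (\<lambda>n. prob_tri_free n (p n)) \<longlonglongrightarrow> 1"
proof (intro exI[of _ "1 / 2304"] conjI allI impI)
  show "(0::real) < 1 / 2304" by simp
  fix p :: "nat \<Rightarrow> real"
  assume p1: "\<forall>n. 0 \<le> p n \<and> p n \<le> 1" and p2: "\<forall>n. p n \<le> 1 / 2304 / (real n)^2"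
  have lo: "\<forall>\<^sub>F n in sequentially. 1 - 2 / real n \<le> prob_tri_free n (p n)"
  proof (rule eventually_sequentiallyI[of 1])
    fix n :: nat assume n: "1 \<le> n"
    have "p n \<le> 1 / (2304 * real n ^ 2)" using p2 by simp
    moreover have "0 \<le> p n" "p n \<le> 1" using p1 by auto
    ultimately have "1 - prob_tri_free n (p n) \<le> 2 / real n" using bound_n[OF n] by blast
    then show "1 - 2 / real n \<le> prob_tri_free n (p n)" by linarith
  qed
  have hi: "\<forall>\<^sub>F n in sequentially. prob_tri_free n (p n) \<le> 1"
    using prob_le1 p1 by (intro always_eventually) blast
  have l1: "(\<lambda>n. 1 - 2 / real n) \<longlonglongrightarrow> 1"
    using tendsto_diff[OF tendsto_const lim_const_over_n[of 2]] by simp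
  show "(\<lambda>n. prob_tri_free n (p n)) \<longlonglongrightarrow> 1"
    by (rule tendsto_sandwich[OF lo hi l1 tendsto_const])
qed


end
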